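(* Let $S$ be an LAD-AG-groupoid. Then $S$ is an AG$^{**}$-groupoid, i.e. $a(bc)=b(ac)$ for all $a,b,c\in S$.
   Context: A groupoid is a set $S$ with a binary operation written as juxtaposition; $ab\cdot c$ means $(ab)c$ and $a\cdot bc$ means $a(bc)$. An AG-groupoid is a groupoid satisfying the left invertive law $(ab)c=(cb)a$ for all $a,b,c\in S$. An LAD-AG-groupoid (left abelian distributive AG-groupoid) is an AG-groupoid satisfying $a(bc)=(ab)(ca)$ for all $a,b,c\in S$. *)

theory Defs
  imports Main
begin

definition AG_groupoid :: "('a \<Rightarrow> 'a \<Rightarrow> 'a) \<Rightarrow> bool" where
  "AG_groupoid m \<longleftrightarrow> (\<forall>a b c. m (m a b) c = m (m c b) a)"

definition LAD_AG_groupoid :: "('a \<Rightarrow> 'a \<Rightarrow> 'a) \<Rightarrow> bool" where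
  "LAD_AG_groupoid m \<longleftrightarrow> AG_groupoid m \<and>
     (\<forall>a b c. m a (m b c) = m (m a b) (m c a))"

definition AG_star_star_groupoid :: "('a \<Rightarrow> 'a \<Rightarrow> 'a) \<Rightarrow> bool" where
  "AG_star_star_groupoid m \<longleftrightarrow> AG_groupoid m \<and>
     (\<forall>a b c. m a (m b c) = m b (m a c))"

end

theory Submission
  imports Defs
begin

lemma key: fixes m :: "'a \<Rightarrow> 'a \<Rightarrow> 'a"
 assumes L: "\<And>a b c. m (m a b) c = m (m c b) a" and D: "\<And>a b c. m a (m b c) = m (m a b) (m c a)"
 shows "m a (m b c) = m b (m a c)"
proof -
  have M: "\<And>a b c d. m (m a b) (m c d) = m (m a c) (m b d)" by (metis L)
  have C: "\<And>x y z. m x (m y z) = m x (m z y)" by (metis D M)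
  have A: "\<And>x y z. m x (m y z) = m (m x x) (m y z)" by (metis D M C)
  show ?thesis by (smt (verit) A C L M)
qed

theorem mainTheorem3:
  fixes m :: "'a \<Rightarrow> 'a \<Rightarrow> 'a"
  assumes "LAD_AG_groupoid m"
  shows "AG_star_star_groupoid m"
proof -
  have L: "\<And>a b c. m (m a b) c = m (m c b) a" and D: "\<And>a b c. m a (m b c) = m (m a b) (m c a)"
    using assms unfolding LAD_AG_groupoid_def AG_groupoid_def by blast+
  show ?thesis unfolding AG_star_star_groupoid_def AG_groupoid_def
    using L key[OF L D] by blast
qed

end
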